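(* $\mathfrak{d}(\beta\omega\setminus\omega,\le_{\mathrm{RK}})=2^{\mathfrak{c}}$.
   Context: $\beta\omega\setminus\omega$ is the set of nonprincipal ultrafilters on $\omega$. For ultrafilters $p,q$ on $\omega$, $p\le_{\mathrm{RK}} q$ (Rudin–Keisler) iff there is $f:\omega\to\omega$ with $p=\{A\subseteq\omega : f^{-1}(A)\in q\}$; this is a preorder, and the definitions below are applied to it verbatim. For a preorder $(P,\le)$, $F\subseteq P$ is dominating if for every $p\in P$ there is $q\in F$ with $p\le q$; $\mathfrak{d}(P,\le)$ is the minimal size of a dominating family. $\mathfrak{c}=2^{\aleph_0}$. *)

theory Defs
  imports Main
begin

definition ultrafilter_on_nat :: "nat set set \<Rightarrow> bool" where
  "ultrafilter_on_nat U \<longleftrightarrow>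
     UNIV \<in> U \<and> {} \<notin> U \<and>
     (\<forall>A B. A \<in> U \<and> A \<subseteq> B \<longrightarrow> B \<in> U) \<and>
     (\<forall>A B. A \<in> U \<and> B \<in> U \<longrightarrow> A \<inter> B \<in> U) \<and>
     (\<forall>A. A \<in> U \<or> - A \<in> U)"

definition nonprincipal :: "nat set set \<Rightarrow> bool" where
  "nonprincipal U \<longleftrightarrow> (\<forall>n. {n} \<notin> U)"

definition beta_omega_rem :: "nat set set set" where
  "beta_omega_rem = {U. ultrafilter_on_nat U \<and> nonprincipal U}"

definition RK_le :: "nat set set \<Rightarrow> nat set set \<Rightarrow> bool" where
  "RK_le p q \<longleftrightarrow> (\<exists>f :: nat \<Rightarrow> nat. p = {A. f -` A \<in> q})"

definition dominating :: "'a set \<Rightarrow> ('a \<Rightarrow> 'a \<Rightarrow> bool) \<Rightarrow> 'a set \<Rightarrow> bool" where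
  "dominating P le F \<longleftrightarrow> F \<subseteq> P \<and> (\<forall>p\<in>P. \<exists>q\<in>F. le p q)"

end

theory Submission
  imports Defs "HOL-Library.Countable"
begin

unbundle cardinal_syntax

definition inX :: "nat list \<times> nat list list \<Rightarrow> nat set \<Rightarrow> bool" where
  "inX c A \<longleftrightarrow> (\<exists>ys\<in>set (snd c). set ys = set (fst c) \<inter> A)"

definition Yset :: "nat set \<Rightarrow> nat set" where
  "Yset A = {n. inX (from_nat n) A}"

lemma separating_finite:
  fixes S :: "nat set set"
  assumes "finite S"
  shows "\<exists>s. finite s \<and> (\<forall>A\<in>S. \<forall>B\<in>S. A \<inter> s = B \<inter> s \<longrightarrow> A = B)"
proof -
  define D where "D = {p \<in> S \<times> S. fst p \<noteq> snd p}"
  define d where "d p = (SOME x. x \<in> fst p \<and> x \<notin> snd p \<or> x \<notin> fst p \<and> x \<in> snd p)" for p :: "nat set \<times> nat set"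
  have fD: "finite D" using assms unfolding D_def by auto
  have dp: "d p \<in> fst p \<and> d p \<notin> snd p \<or> d p \<notin> fst p \<and> d p \<in> snd p" if "p \<in> D" for p
  proof -
    from that have "fst p \<noteq> snd p" unfolding D_def by auto
    then have "\<exists>x. x \<in> fst p \<and> x \<notin> snd p \<or> x \<notin> fst p \<and> x \<in> snd p" by blast
    then show ?thesis unfolding d_def by (rule someI_ex)
  qed
  show ?thesis
  proof (intro exI conjI ballI impI)
    show "finite (d ` D)" using fD by simp
    fix A B assume AB: "A \<in> S" "B \<in> S" "A \<inter> d ` D = B \<inter> d ` D"
    show "A = B"
    proof (rule ccontr)
      assume "A \<noteq> B"
      then have "(A, B) \<in> D" using AB unfolding D_def by auto
      then have "d (A,B) \<in> d ` D" by blast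
      then show False using dp[OF \<open>(A, B) \<in> D\<close>] AB(3) by (metis IntD1 IntI fst_conv snd_conv)
    qed
  qed
qed

lemma indep:
  assumes "finite P" "finite N" "P \<inter> N = {}"
  shows "infinite {n. (\<forall>A\<in>P. n \<in> Yset A) \<and> (\<forall>B\<in>N. n \<notin> Yset B)}"
proof -
  obtain s where s: "finite s" "\<forall>A\<in>P \<union> N. \<forall>B\<in>P \<union> N. A \<inter> s = B \<inter> s \<longrightarrow> A = B"
    using separating_finite[of "P \<union> N"] assms by auto
  obtain L where L: "set L = P" using finite_list assms(1) by blast
  define c where "c k = (sorted_list_of_set (s \<union> {k}),
      map (\<lambda>A. sorted_list_of_set ((s \<union> {k}) \<inter> A)) L)" for k
  have mem: "to_nat (c k) \<in> {n. (\<forall>A\<in>P. n \<in> Yset A) \<and> (\<forall>B\<in>N. n \<notin> Yset B)}" for k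
  proof -
    have fk: "finite (s \<union> {k})" using s by simp
    have fst: "set (fst (c k)) = s \<union> {k}" unfolding c_def using fk by (simp only: fst_conv set_sorted_list_of_set)
    have "inX (c k) A" if "A \<in> P" for A
      unfolding inX_def fst using that L fk by (auto simp: c_def)
    moreover have "\<not> inX (c k) B" if "B \<in> N" for B
    proof
      assume "inX (c k) B"
      then obtain A where A: "A \<in> P" "(s \<union> {k}) \<inter> A = (s \<union> {k}) \<inter> B"
        unfolding inX_def fst using L fk by (auto simp: c_def)
      then have "A \<inter> s = B \<inter> s" by blast
      then have "A = B" using s(2) A(1) that by blast
      then show False using A(1) that assms(3) by blast
    qed
    ultimately show ?thesis unfolding Yset_def by simp
  qed
  have inj: "inj_on (\<lambda>k. to_nat (c k)) (- s)"
  proof (rule inj_onI)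
    fix k k' assume kk: "k \<in> - s" "k' \<in> - s" "to_nat (c k) = to_nat (c k')"
    then have "c k = c k'" by (meson inj_eq inj_to_nat)
    then have "set (fst (c k)) = set (fst (c k'))" by simp
    moreover have "set (fst (c j)) = s \<union> {j}" for j unfolding c_def using s(1) by (simp only: fst_conv set_sorted_list_of_set finite_Un finite.intros)
    ultimately have "s \<union> {k} = s \<union> {k'}" by simp
    then show "k = k'" using kk by blast
  qed
  have "infinite (- s)" using s(1) by (simp add: Compl_eq_Diff_UNIV)
  then have "infinite ((\<lambda>k. to_nat (c k)) ` (- s))" using inj finite_imageD by blast
  moreover have "(\<lambda>k. to_nat (c k)) ` (- s) \<subseteq> {n. (\<forall>A\<in>P. n \<in> Yset A) \<and> (\<forall>B\<in>N. n \<notin> Yset B)}"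
    using mem by blast
  ultimately show ?thesis using finite_subset by blast
qed


definition fip :: "nat set set \<Rightarrow> bool" where
  "fip M \<longleftrightarrow> (\<forall>F. finite F \<and> F \<subseteq> M \<longrightarrow> \<Inter>F \<noteq> {})"

lemma ultra_ext:
  assumes "fip B"
  shows "\<exists>U. ultrafilter_on_nat U \<and> B \<subseteq> U"
proof -
  define Z where "Z = {M. B \<subseteq> M \<and> fip M}"
  have "\<forall>C\<in>chains Z. \<exists>U\<in>Z. \<forall>X\<in>C. X \<subseteq> U"
  proof
    fix C assume C: "C \<in> chains Z"
    show "\<exists>U\<in>Z. \<forall>X\<in>C. X \<subseteq> U"
    proof (cases "C = {}")
      case True
      then show ?thesis using assms unfolding Z_def by auto
    next
      case False
      have ch: "subset.chain Z C" using C by (simp add: chains_alt_def)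
      have "\<Union>C \<in> Z" unfolding Z_def
      proof (intro CollectI conjI)
        obtain X where "X \<in> C" using False by blast
        then have "X \<in> Z" using C unfolding chains_def by blast
        then have "B \<subseteq> X" unfolding Z_def by simp
        then show "B \<subseteq> \<Union>C" using \<open>X \<in> C\<close> by blast
        show "fip (\<Union>C)" unfolding fip_def
        proof (intro allI impI)
          fix F assume F: "finite F \<and> F \<subseteq> \<Union>C"
          then obtain M where "M \<in> C" "F \<subseteq> M"
            using finite_subset_Union_chain[OF _ _ False ch] by blast
          moreover have "fip M" using \<open>M \<in> C\<close> C unfolding chains_def Z_def by blast
          ultimately show "\<Inter>F \<noteq> {}" using F unfolding fip_def by blast
        qed
      qed
      then show ?thesis by blast
    qed
  qed
  from Zorn_Lemma2[OF this] obtain M where M: "M \<in> Z" "\<forall>X\<in>Z. M \<subseteq> X \<longrightarrow> X = M" by blast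
  have BM: "B \<subseteq> M" and fM: "fip M" using M(1) unfolding Z_def by auto
  define U where "U = {A. \<exists>F. finite F \<and> F \<subseteq> M \<and> \<Inter>F \<subseteq> A}"
  have ins: "A \<in> M" if "fip (insert A M)" for A
  proof -
    have "insert A M \<in> Z" using BM that unfolding Z_def by blast
    then have "insert A M = M" using M(2) by blast
    then show ?thesis by blast
  qed
  have compl: "A \<in> U \<or> - A \<in> U" for A
  proof (cases "fip (insert A M)")
    case True
    then have "A \<in> M" by (rule ins)
    then show ?thesis unfolding U_def by (intro disjI1 CollectI exI[of _ "{A}"]) auto
  next
    case f1: False
    show ?thesis
    proof (cases "fip (insert (- A) M)")
      case True
      then have "- A \<in> M" by (rule ins)
      then show ?thesis unfolding U_def by (intro disjI2 CollectI exI[of _ "{- A}"]) auto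
    next
      case f2: False
      obtain F1 where F1: "finite F1" "F1 \<subseteq> insert A M" "\<Inter>F1 = {}" using f1 unfolding fip_def by blast
      obtain F2 where F2: "finite F2" "F2 \<subseteq> insert (- A) M" "\<Inter>F2 = {}" using f2 unfolding fip_def by blast
      have "finite (F1 - {A} \<union> (F2 - {- A}))" "F1 - {A} \<union> (F2 - {- A}) \<subseteq> M"
        using F1 F2 by auto
      moreover have "\<Inter>(F1 - {A} \<union> (F2 - {- A})) = {}"
      proof -
        have i1: "x \<in> \<Inter>F1" if "x \<in> \<Inter>(F1 - {A})" "x \<in> A" for x
          using that by (metis DiffI InterE InterI singletonD)
        have i2: "x \<in> \<Inter>F2" if "x \<in> \<Inter>(F2 - {- A})" "x \<in> - A" for x
          using that by (metis DiffI InterE InterI singletonD)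
        have "x \<notin> \<Inter>(F1 - {A}) \<inter> \<Inter>(F2 - {- A})" for x
        proof
          assume x: "x \<in> \<Inter>(F1 - {A}) \<inter> \<Inter>(F2 - {- A})"
          show False
          proof (cases "x \<in> A")
            case True then show False using i1[of x] x F1(3) by blast
          next
            case False then show False using i2[of x] x F2(3) by blast
          qed
        qed
        then have "\<Inter>(F1 - {A}) \<inter> \<Inter>(F2 - {- A}) = {}" by blast
        then show ?thesis by (simp only: Inter_Un_distrib)
      qed
      ultimately have False using fM unfolding fip_def by (metis (no_types, lifting))
      then show ?thesis ..
    qed
  qed
  have "ultrafilter_on_nat U" unfolding ultrafilter_on_nat_def
  proof (intro conjI allI impI)
    show "UNIV \<in> U" unfolding U_def by blast
    show "{} \<notin> U" using fM unfolding U_def fip_def by blast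
    fix A B' assume "A \<in> U \<and> A \<subseteq> B'" then show "B' \<in> U" unfolding U_def by blast
  next
    fix A B' assume AB: "A \<in> U \<and> B' \<in> U"
    then obtain F1 F2 where "finite F1" "F1 \<subseteq> M" "\<Inter>F1 \<subseteq> A" "finite F2" "F2 \<subseteq> M" "\<Inter>F2 \<subseteq> B'"
      unfolding U_def by blast
    then show "A \<inter> B' \<in> U" unfolding U_def by (intro CollectI exI[of _ "F1 \<union> F2"]) auto
  next
    fix A show "A \<in> U \<or> - A \<in> U" by (rule compl)
  qed
  moreover have "B \<subseteq> U"
  proof
    fix X assume "X \<in> B"
    then have "finite {X} \<and> {X} \<subseteq> M \<and> \<Inter>{X} \<subseteq> X" using BM by auto
    then show "X \<in> U" unfolding U_def by blast
  qed
  ultimately show ?thesis by blast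
qed


definition Base :: "(nat set \<Rightarrow> bool) \<Rightarrow> nat set set" where
  "Base g = Yset ` {A. g A} \<union> (\<lambda>A. - Yset A) ` {A. \<not> g A} \<union> {C. finite (- C)}"

lemma fip_Base: "fip (Base g)"
  unfolding fip_def
proof (intro allI impI)
  fix F assume F: "finite F \<and> F \<subseteq> Base g"
  define F1 where "F1 = F \<inter> Yset ` {A. g A}"
  define F2 where "F2 = F \<inter> (\<lambda>A. - Yset A) ` {A. \<not> g A}"
  define F3 where "F3 = F \<inter> {C. finite (- C)}"
  have "finite F1" "F1 \<subseteq> Yset ` {A. g A}" using F unfolding F1_def by auto
  then obtain P where P: "P \<subseteq> {A. g A}" "finite P" "F1 = Yset ` P"
    using finite_subset_image by metis
  have "finite F2" "F2 \<subseteq> (\<lambda>A. - Yset A) ` {A. \<not> g A}" using F unfolding F2_def by auto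
  then obtain N where N: "N \<subseteq> {A. \<not> g A}" "finite N" "F2 = (\<lambda>A. - Yset A) ` N"
    using finite_subset_image by metis
  have PN: "P \<inter> N = {}" using P N by blast
  define I where "I = {n. (\<forall>A\<in>P. n \<in> Yset A) \<and> (\<forall>B\<in>N. n \<notin> Yset B)}"
  have infI: "infinite I" unfolding I_def using indep[OF P(2) N(2) PN] .
  have fin3: "finite (- \<Inter>F3)"
  proof -
    have "- \<Inter>F3 = \<Union>(uminus ` F3)" by auto
    moreover have "finite F3" using F unfolding F3_def by auto
    moreover have "\<forall>X\<in>uminus ` F3. finite X" unfolding F3_def by auto
    ultimately show ?thesis by simp
  qed
  have sub: "I \<inter> \<Inter>F3 \<subseteq> \<Inter>F"
  proof
    fix n assume n: "n \<in> I \<inter> \<Inter>F3"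
    show "n \<in> \<Inter>F"
    proof
      fix X assume X: "X \<in> F"
      then have "X \<in> F1 \<or> X \<in> F2 \<or> X \<in> F3" using F unfolding F1_def F2_def F3_def Base_def by blast
      then show "n \<in> X"
      proof (elim disjE)
        assume "X \<in> F1" then obtain A where "A \<in> P" "X = Yset A" using P(3) by blast
        then show ?thesis using n unfolding I_def by blast
      next
        assume "X \<in> F2" then obtain A where "A \<in> N" "X = - Yset A" using N(3) by blast
        then show ?thesis using n unfolding I_def by blast
      next
        assume "X \<in> F3" then show ?thesis using n by blast
      qed
    qed
  qed
  have "I \<inter> \<Inter>F3 \<noteq> {}"
  proof
    assume "I \<inter> \<Inter>F3 = {}"
    then have "I \<subseteq> - \<Inter>F3" by blast
    then show False using infI fin3 finite_subset by blast
  qed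
  then show "\<Inter>F \<noteq> {}" using sub by blast
qed

definition UF :: "nat set set \<Rightarrow> nat set set" where
  "UF C = (SOME U. ultrafilter_on_nat U \<and> Base (\<lambda>A. A \<in> C) \<subseteq> U)"

lemma UF_prop: "ultrafilter_on_nat (UF C) \<and> Base (\<lambda>A. A \<in> C) \<subseteq> UF C"
  unfolding UF_def by (rule someI_ex[OF ultra_ext[OF fip_Base]])

lemma UF_in: "UF C \<in> beta_omega_rem"
proof -
  have u: "ultrafilter_on_nat (UF C)" and b: "Base (\<lambda>A. A \<in> C) \<subseteq> UF C" using UF_prop by auto
  have "{n} \<notin> UF C" for n
  proof
    assume a: "{n} \<in> UF C"
    have "- {n} \<in> Base (\<lambda>A. A \<in> C)" unfolding Base_def by simp
    then have "- {n} \<in> UF C" using b by blast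
    then have "{n} \<inter> - {n} \<in> UF C" using a u unfolding ultrafilter_on_nat_def by blast
    then show False using u unfolding ultrafilter_on_nat_def by simp
  qed
  then show ?thesis using u unfolding beta_omega_rem_def nonprincipal_def by simp
qed

lemma UF_sep:
  assumes "A \<in> C" "A \<notin> C'"
  shows "UF C \<noteq> UF C'"
proof
  assume eq: "UF C = UF C'"
  have "Yset A \<in> Base (\<lambda>X. X \<in> C)" using assms(1) unfolding Base_def by blast
  then have 1: "Yset A \<in> UF C" using UF_prop by blast
  have "- Yset A \<in> Base (\<lambda>X. X \<in> C')" using assms(2) unfolding Base_def by blast
  then have 2: "- Yset A \<in> UF C" using UF_prop eq by blast
  have u: "ultrafilter_on_nat (UF C)" using UF_prop by blast
  have "Yset A \<inter> - Yset A \<in> UF C" using 1 2 u unfolding ultrafilter_on_nat_def by blast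
  then show False using u unfolding ultrafilter_on_nat_def by simp
qed

lemma UF_inj: "inj UF"
proof (rule injI)
  fix C C' assume eq: "UF C = UF C'"
  show "C = C'"
  proof (rule ccontr)
    assume "C \<noteq> C'"
    then obtain A where "A \<in> C \<and> A \<notin> C' \<or> A \<in> C' \<and> A \<notin> C" by blast
    then show False using UF_sep eq by metis
  qed
qed

lemma big: "|Pow (UNIV :: nat set set)| \<le>o |beta_omega_rem|"
proof -
  have "inj_on UF (Pow UNIV) \<and> UF ` Pow UNIV \<subseteq> beta_omega_rem"
    using UF_inj UF_in by (auto intro: inj_on_subset)
  then show ?thesis using card_of_ordLeq by blast
qed


lemma times_less:
  assumes INF: "\<not>finite C" and LESS1: "|A| <o |C|" and LESS2: "|B| <o |C|"
  shows "|A \<times> B| <o |C|"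
proof(cases "A = {} \<or> B = {}")
  case True
  then show ?thesis
  proof
    assume "A = {}"
    then have "|A \<times> B| \<le>o |A|" using card_of_empty[of A] by simp
    then show ?thesis using LESS1 ordLeq_ordLess_trans by blast
  next
    assume "B = {}"
    then have "|A \<times> B| \<le>o |B|" using card_of_empty[of B] by simp
    then show ?thesis using LESS2 ordLeq_ordLess_trans by blast
  qed
next
  case Case2: False
  {assume *: "|C| \<le>o |A \<times> B|"
    hence "\<not>finite (A \<times> B)" using INF card_of_ordLeq_finite by blast
    hence 1: "\<not>finite A \<or> \<not>finite B" using finite_cartesian_product by blast
    {assume Case21: "|A| \<le>o |B|"
      hence "\<not>finite B" using 1 card_of_ordLeq_finite by blast
      hence "|A \<times> B| =o |B|" using Case2 Case21 by (auto simp: card_of_Times_infinite)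
      hence False using LESS2 not_ordLess_ordLeq * ordLeq_ordIso_trans by blast
    }
    moreover
    {assume Case22: "|B| \<le>o |A|"
      hence "\<not>finite A" using 1 card_of_ordLeq_finite by blast
      hence "|A \<times> B| =o |A|" using Case2 Case22 by (auto simp: card_of_Times_infinite)
      hence False using LESS1 not_ordLess_ordLeq * ordLeq_ordIso_trans by blast
    }
    ultimately have False using ordLeq_total card_of_Well_order[of A] card_of_Well_order[of B] by blast
  }
  thus ?thesis using ordLess_or_ordLeq[of "|A \<times> B|" "|C|"]
      card_of_Well_order[of "A \<times> B"] card_of_Well_order[of "C"] by auto
qed

lemma fun_small: "|UNIV :: (nat \<Rightarrow> nat) set| <o |Pow (UNIV :: nat set set)|"
proof -
  have "inj (\<lambda>f::nat\<Rightarrow>nat. range (\<lambda>n. to_nat (n, f n)))"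
  proof (rule injI)
    fix f g :: "nat \<Rightarrow> nat"
    assume eq: "range (\<lambda>n. to_nat (n, f n)) = range (\<lambda>n. to_nat (n, g n))"
    show "f = g"
    proof
      fix n
      have "to_nat (n, f n) \<in> range (\<lambda>n. to_nat (n, g n))" using eq by blast
      then obtain m where "to_nat (n, f n) = to_nat (m, g m)" by blast
      then have "(n, f n) = (m, g m)" by (meson inj_eq inj_to_nat)
      then show "f n = g n" by auto
    qed
  qed
  then have "|UNIV :: (nat \<Rightarrow> nat) set| \<le>o |UNIV :: nat set set|"
    using card_of_ordLeq[of "UNIV :: (nat \<Rightarrow> nat) set" "UNIV :: nat set set"] by blast
  moreover have "|UNIV :: nat set set| <o |Pow (UNIV :: nat set set)|" by (rule card_of_Pow)
  ultimately show ?thesis using ordLeq_ordLess_trans by blast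
qed

theorem mainTheorem18:
  shows "(\<exists>F. dominating beta_omega_rem RK_le F \<and>
            (card_of F, card_of (Pow (UNIV :: nat set set))) \<in> ordIso)
       \<and> (\<forall>F. dominating beta_omega_rem RK_le F \<longrightarrow>
            (card_of (Pow (UNIV :: nat set set)), card_of F) \<in> ordLeq)"
proof (intro conjI allI impI)
  have dom: "dominating beta_omega_rem RK_le beta_omega_rem"
    unfolding dominating_def RK_le_def by (auto intro!: exI[of _ id])
  have le: "|beta_omega_rem| \<le>o |Pow (UNIV :: nat set set)|"
    by (rule card_of_mono1) simp
  have "|beta_omega_rem| =o |Pow (UNIV :: nat set set)|"
    using le big ordIso_iff_ordLeq by blast
  then show "\<exists>F. dominating beta_omega_rem RK_le F \<and>
            (card_of F, card_of (Pow (UNIV :: nat set set))) \<in> ordIso"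
    using dom by blast
next
  fix F assume F: "dominating beta_omega_rem RK_le F"
  let ?h = "\<lambda>(q, f::nat\<Rightarrow>nat). {A. f -` A \<in> q}"
  have "beta_omega_rem \<subseteq> ?h ` (F \<times> UNIV)"
  proof
    fix p assume "p \<in> beta_omega_rem"
    then obtain q f where "q \<in> F" "p = {A. f -` A \<in> q}"
      using F unfolding dominating_def RK_le_def by blast
    then show "p \<in> ?h ` (F \<times> UNIV)" by force
  qed
  then have 1: "|beta_omega_rem| \<le>o |F \<times> (UNIV :: (nat \<Rightarrow> nat) set)|"
    by (rule surj_imp_ordLeq)
  show "(card_of (Pow (UNIV :: nat set set)), card_of F) \<in> ordLeq"
  proof (rule ccontr)
    assume "\<not> (card_of (Pow (UNIV :: nat set set)), card_of F) \<in> ordLeq"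
    then have "|F| <o |Pow (UNIV :: nat set set)|"
      using not_ordLeq_iff_ordLess card_of_Well_order by blast
    moreover have "\<not> finite (Pow (UNIV :: nat set set))"
    proof -
      have "\<not> finite (UNIV :: nat set set)"
        using finite_Pow_iff[of "UNIV::nat set"] Pow_UNIV infinite_UNIV_nat by metis
      then show ?thesis using finite_Pow_iff[of "UNIV::nat set set"] by metis
    qed
    ultimately have "|F \<times> (UNIV :: (nat \<Rightarrow> nat) set)| <o |Pow (UNIV :: nat set set)|"
      using times_less fun_small by blast
    moreover have "|Pow (UNIV :: nat set set)| \<le>o |F \<times> (UNIV :: (nat \<Rightarrow> nat) set)|"
      using big 1 ordLeq_transitive by blast
    ultimately show False using not_ordLess_ordLeq by blast
  qed
qed

end
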